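(* Let $d\geq 0$ and $i>0$ be integers, and let $h(t)$ be a polynomial with rational coefficients of degree at most $d+1$ that is symmetric about $\frac{d+1}{2}$, i.e. $h(t)=t^{d+1}h(1/t)$. If $g^{(d,i)}(h(t))\geq 0$ componentwise, then $g^{(d,i+1)}(h(t))\geq 0$ componentwise.
   Context: For integers $d\geq 0$ and $i>0$, let $q\geq 0$, $1\leq r\leq i$ be the unique integers with $d+1=qi+r$ and define $P_{d,i}(t)=(1+t+\cdots+t^i)^q(1+t+\cdots+t^r)$; also set $P_{-1,i}(t)=1$. Let $B_{d,i}$ be the ordered list $\big(P_{d,i}(t),\ tP_{d-2,i}(t),\ t^2P_{d-4,i}(t),\ldots,\ t^{\lfloor (d+1)/2\rfloor}P_{d-2\lfloor (d+1)/2\rfloor,i}(t)\big)$, which is a basis of the $\mathbb{Q}$-vector space of polynomials of degree at most $d+1$ satisfying $h(t)=t^{d+1}h(1/t)$. For such $h$, $g^{(d,i)}(h(t))=(g_0,\ldots,g_{\lfloor (d+1)/2\rfloor})$ is the vector of coefficients of $h$ in the basis $B_{d,i}$, i.e. $h(t)=\sum_j g_j t^jP_{d-2j,i}(t)$. *)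

theory Defs
  imports "HOL-Computational_Algebra.Polynomial"
begin

definition geom_poly :: "nat \<Rightarrow> rat poly" where
  "geom_poly i = (\<Sum>k\<le>i. monom 1 k)"

text \<open>P_{d,i}(t) for integer d >= -1 and i > 0: with d+1 = q*i + r, 1 <= r <= i,
  we have q = d div i and r = d mod i + 1.  P_{-1,i} = 1 (also used for any d < 0).\<close>
definition Pdi :: "int \<Rightarrow> nat \<Rightarrow> rat poly" where
  "Pdi d i = (if d < 0 then 1
              else geom_poly i ^ nat (d div int i) * geom_poly (nat (d mod int i) + 1))"

text \<open>The vector g^{(d,i)}(h) of coefficients of h in the basis B_{d,i}, as a function
  of the index j (components j > floor((d+1)/2) are zero).\<close>
definition gvec :: "nat \<Rightarrow> nat \<Rightarrow> rat poly \<Rightarrow> nat \<Rightarrow> rat" where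
  "gvec d i h = (THE g. (\<forall>j > (d + 1) div 2. g j = 0) \<and>
      h = (\<Sum>j\<le>(d + 1) div 2. smult (g j) (monom 1 j * Pdi (int d - 2 * int j) i)))"

end

theory Submission
  imports Defs
begin

abbreviation X :: "rat poly" where "X \<equiv> [:0,1:]"

lemma geom_Suc: "geom_poly (Suc n) = geom_poly n + X ^ Suc n"
  unfolding geom_poly_def by (simp add: monom_altdef)

lemma geom_0: "geom_poly 0 = 1"
  unfolding geom_poly_def by (simp add: monom_0 one_pCons)

lemma ring_aux: "1 - x ^ Suc n + (1 - x) * x ^ Suc n = 1 - x ^ Suc (Suc n)" for x :: "'a::comm_ring_1"
  by (simp add: algebra_simps)

lemma geom_mult: "(1 - X) * geom_poly n = 1 - X ^ Suc n"
proof (induction n)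
  case 0 then show ?case by (simp add: geom_0)
next
  case (Suc n)
  have "(1 - X) * geom_poly (Suc n) = (1 - X) * geom_poly n + (1 - X) * X ^ Suc n"
    by (simp only: geom_Suc distrib_left)
  also have "\<dots> = 1 - X ^ Suc n + (1 - X) * X ^ Suc n" using Suc by simp
  also have "1 - X ^ Suc n + (1 - X) * X ^ Suc n = 1 - X ^ Suc (Suc n)"
    using ring_aux[of X n] .
  finally show ?case .
qed

lemma geom_S: "geom_poly (Suc a) * geom_poly (Suc a + c) = geom_poly a * geom_poly (Suc (Suc a) + c) + X ^ Suc a * geom_poly c"
proof -
  define D where "D = (1 - X)"
  have "D \<noteq> 0" unfolding D_def by (simp add: one_pCons)
  then have D0: "D * D \<noteq> 0" by simp
  have "(D * D) * (geom_poly (Suc a) * geom_poly (Suc a + c)) = (D * geom_poly (Suc a)) * (D * geom_poly (Suc a + c))"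
    by (simp add: algebra_simps)
  also have "\<dots> = (1 - X ^ Suc a * X) * (1 - X ^ Suc a * X * X ^ c)"
    unfolding D_def geom_mult by (simp add: power_add)
  also have "\<dots> = (1 - X ^ Suc a) * (1 - X ^ Suc a * X * X * X ^ c) + X ^ Suc a * ((1 - X) * (1 - X ^ c * X))"
    by (simp add: algebra_simps)
  also have "(1 - X) = D" unfolding D_def by simp
  also have "(1 - X ^ c * X) = D * geom_poly c" unfolding D_def geom_mult by (simp add: algebra_simps)
  also have "(1 - X ^ Suc a) = D * geom_poly a" unfolding D_def geom_mult by simp
  also have "(1 - X ^ Suc a * X * X * X ^ c) = D * geom_poly (Suc (Suc a) + c)" unfolding D_def geom_mult by (simp add: power_add algebra_simps)
  finally have "(D * D) * (geom_poly (Suc a) * geom_poly (Suc a + c)) = (D * D) * (geom_poly a * geom_poly (Suc (Suc a) + c) + X ^ Suc a * geom_poly c)"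
    by (simp add: algebra_simps)
  then show ?thesis using D0 by simp
qed

definition symm :: "nat \<Rightarrow> rat poly \<Rightarrow> bool" where
  "symm n p \<longleftrightarrow> degree p \<le> n \<and> (\<forall>x::rat. x \<noteq> 0 \<longrightarrow> poly p x = x ^ n * poly p (1 / x))"

lemma symm_mult: "symm a p \<Longrightarrow> symm b q \<Longrightarrow> symm (a + b) (p * q)"
  unfolding symm_def
proof (intro conjI allI impI)
  assume A: "degree p \<le> a \<and> (\<forall>x::rat. x \<noteq> 0 \<longrightarrow> poly p x = x ^ a * poly p (1 / x))"
    and B: "degree q \<le> b \<and> (\<forall>x::rat. x \<noteq> 0 \<longrightarrow> poly q x = x ^ b * poly q (1 / x))"
  show "degree (p * q) \<le> a + b" using A B degree_mult_le[of p q] by linarith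
  fix x :: rat assume "x \<noteq> 0"
  note e1 = A[THEN conjunct2, rule_format, OF \<open>x \<noteq> 0\<close>]
  note e2 = B[THEN conjunct2, rule_format, OF \<open>x \<noteq> 0\<close>]
  from e1 e2 have "poly p x = x ^ a * poly p (1 / x)" "poly q x = x ^ b * poly q (1 / x)" by -
  then show "poly (p * q) x = x ^ (a + b) * poly (p * q) (1 / x)"
    by (simp only: poly_mult power_add mult_ac)
qed

lemma symm_one: "symm 0 1" unfolding symm_def by simp

lemma symm_power: "symm a p \<Longrightarrow> symm (a * k) (p ^ k)"
proof (induction k)
  case 0 then show ?case by (simp add: symm_one)
next
  case (Suc k)
  then have "symm (a + a * k) (p * p ^ k)" using symm_mult by blast
  then show ?case by simp
qed

lemma poly_geom: "poly (geom_poly n) x = (\<Sum>k\<le>n. x ^ k)"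
  unfolding geom_poly_def by (simp add: poly_sum poly_monom)

lemma degree_geom: "degree (geom_poly n) \<le> n"
  unfolding geom_poly_def by (rule degree_sum_le) (simp_all add: degree_monom_eq)

lemma symm_geom: "symm n (geom_poly n)"
  unfolding symm_def
proof (intro conjI allI impI)
  show "degree (geom_poly n) \<le> n" by (rule degree_geom)
  fix x :: rat assume x: "x \<noteq> 0"
  have "x ^ n * poly (geom_poly n) (1 / x) = (\<Sum>k\<le>n. x ^ n * (1/x) ^ k)"
    by (simp add: poly_geom sum_distrib_left)
  also have "\<dots> = (\<Sum>k\<le>n. x ^ (n - k))"
    by (rule sum.cong) (use x in \<open>auto simp: power_diff power_one_over\<close>)
  also have "\<dots> = (\<Sum>k\<le>n. x ^ k)"
    by (rule sum.reindex_bij_witness[where i="\<lambda>k. n-k" and j="\<lambda>k. n-k"]) auto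
  finally show "poly (geom_poly n) x = x ^ n * poly (geom_poly n) (1 / x)"
    by (simp add: poly_geom)
qed

lemma Pdi_pos: "d \<ge> 0 \<Longrightarrow> Pdi d i = geom_poly i ^ nat (d div int i) * geom_poly (nat (d mod int i) + 1)"
  unfolding Pdi_def by simp

lemma symm_Pdi:
  assumes "i > 0" "d \<ge> -1"
  shows "symm (nat (d + 1)) (Pdi d i)"
proof (cases "d < 0")
  case True
  then have "d = -1" using assms by simp
  then show ?thesis by (simp add: Pdi_def symm_one)
next
  case False
  have "symm (i * nat (d div int i) + (nat (d mod int i) + 1)) (Pdi d i)"
    unfolding Pdi_pos[OF linorder_not_less[THEN iffD1, OF False]]
    by (intro symm_mult symm_power symm_geom)
  moreover have "i * nat (d div int i) + (nat (d mod int i) + 1) = nat (d + 1)"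
  proof -
    have "int i * (d div int i) + d mod int i = d" by simp
    moreover have "d div int i \<ge> 0" "d mod int i \<ge> 0" using False assms by (auto simp: pos_imp_zdiv_nonneg_iff)
    ultimately have "int (i * nat (d div int i) + (nat (d mod int i) + 1)) = d + 1" by simp
    then show ?thesis by (metis nat_int)
  qed
  ultimately show ?thesis by metis
qed

lemma coeff0_geom: "coeff (geom_poly n) 0 = 1"
  unfolding geom_poly_def coeff_sum coeff_monom by (simp add: sum.delta)

lemma coeff0_Pdi: "coeff (Pdi d i) 0 = 1"
  unfolding Pdi_def by (simp add: coeff_mult_0 coeff_0_power coeff0_geom)


lemma poly_eq_nz:
  fixes p q :: "rat poly"
  assumes "\<forall>x. x \<noteq> 0 \<longrightarrow> poly p x = poly q x"
  shows "p = q"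
proof (rule ccontr)
  assume "p \<noteq> q"
  then have "p - q \<noteq> 0" by simp
  then have "finite {x. poly (p - q) x = 0}" by (rule poly_roots_finite)
  moreover have "{x. x \<noteq> 0} \<subseteq> {x. poly (p - q) x = 0}" using assms by auto
  ultimately have "finite {x::rat. x \<noteq> 0}" by (rule finite_subset[rotated])
  then have "finite (insert 0 {x::rat. x \<noteq> 0})" by simp
  moreover have "insert 0 {x::rat. x \<noteq> 0} = UNIV" by auto
  ultimately show False using infinite_UNIV_char_0 by metis
qed

lemma symm_coeff:
  assumes "symm n p"
  shows "coeff p n = coeff p 0"
proof (cases "p = 0")
  case True then show ?thesis by simp
next
  case False
  define m where "m = degree p"
  have mn: "m \<le> n" using assms unfolding symm_def m_def by simp
  have eq: "p = monom 1 (n - m) * reflect_poly p"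
  proof (rule poly_eq_nz, intro allI impI)
    fix x :: rat assume x: "x \<noteq> 0"
    have "poly (monom 1 (n - m) * reflect_poly p) x = x ^ (n - m) * (x ^ m * poly p (inverse x))"
      using x by (simp add: poly_monom poly_reflect_poly_nz m_def)
    also have "\<dots> = x ^ n * poly p (1 / x)"
      using mn by (simp add: mult.assoc[symmetric] power_add[symmetric] inverse_eq_divide)
    also have "\<dots> = poly p x" using assms x unfolding symm_def by (metis (no_types))
    finally show "poly p x = poly (monom 1 (n - m) * reflect_poly p) x" by simp
  qed
  have "coeff p 0 = coeff (monom 1 (n - m) * reflect_poly p) 0" using eq by simp
  also have "\<dots> = (if 0 < n - m then 0 else lead_coeff p)"
    by (simp add: coeff_monom_mult)
  finally show ?thesis
    using mn by (cases "m = n") (auto simp: m_def coeff_eq_0)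
qed

lemma symm_diff: "symm n p \<Longrightarrow> symm n q \<Longrightarrow> symm n (p - smult c q)"
  unfolding symm_def
proof (intro conjI allI impI)
  assume A: "degree p \<le> n \<and> (\<forall>x::rat. x \<noteq> 0 \<longrightarrow> poly p x = x ^ n * poly p (1 / x))"
    and B: "degree q \<le> n \<and> (\<forall>x::rat. x \<noteq> 0 \<longrightarrow> poly q x = x ^ n * poly q (1 / x))"
  show "degree (p - smult c q) \<le> n"
    using A B degree_diff_le[of p n "smult c q"] degree_smult_le[of c q] by linarith
  fix x :: rat assume "x \<noteq> 0"
  note e1 = A[THEN conjunct2, rule_format, OF \<open>x \<noteq> 0\<close>]
  note e2 = B[THEN conjunct2, rule_format, OF \<open>x \<noteq> 0\<close>]
  from e1 e2 have "poly p x = x ^ n * poly p (1 / x)" "poly q x = x ^ n * poly q (1 / x)" by -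
  then show "poly (p - smult c q) x = x ^ n * poly (p - smult c q) (1 / x)"
    by (simp only: poly_diff poly_smult algebra_simps)
qed

definition bsum :: "nat \<Rightarrow> nat \<Rightarrow> (nat \<Rightarrow> rat) \<Rightarrow> rat poly" where
  "bsum n i c = (\<Sum>j\<le>n div 2. smult (c j) (monom 1 j * Pdi (int n - 1 - 2 * int j) i))"

lemma bsum_zero:
  assumes "bsum n i c = 0" "j \<le> n div 2"
  shows "c j = 0"
  using assms(2)
proof (induction j rule: less_induct)
  case (less j)
  have "0 = coeff (bsum n i c) j" using assms by simp
  also have "\<dots> = (\<Sum>k\<le>n div 2. c k * (if j < k then 0 else coeff (Pdi (int n - 1 - 2 * int k) i) (j - k)))"
    unfolding bsum_def coeff_sum coeff_smult coeff_monom_mult by (rule sum.cong, rule refl, simp only: mult_1_left)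
  also have "\<dots> = (\<Sum>k\<le>n div 2. if k = j then c j else 0)"
  proof (rule sum.cong)
    fix k assume k: "k \<in> {..n div 2}"
    show "c k * (if j < k then 0 else coeff (Pdi (int n - 1 - 2 * int k) i) (j - k)) = (if k = j then c j else 0)"
    proof (cases "k < j")
      case True then show ?thesis using less k by auto
    next
      case False then show ?thesis by (auto simp: coeff0_Pdi)
    qed
  qed simp
  also have "\<dots> = c j" using less by simp
  finally show ?case by simp
qed

lemma bsum_diff: "bsum n i (\<lambda>j. c j - c' j) = bsum n i c - bsum n i c'"
  by (simp add: bsum_def sum_subtractf smult_diff_left)

lemma bsum_unique: "bsum n i c = bsum n i c' \<Longrightarrow> j \<le> n div 2 \<Longrightarrow> c j = c' j"
  using bsum_zero[of n i "\<lambda>j. c j - c' j" j] by (simp add: bsum_diff)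

lemma bsum_Suc: "bsum (Suc d) i c = (\<Sum>j\<le>(d + 1) div 2. smult (c j) (monom 1 j * Pdi (int d - 2 * int j) i))"
  by (simp add: bsum_def)

lemma gvec_eq:
  assumes "\<forall>j > (d + 1) div 2. c j = 0" "h = bsum (Suc d) i c"
  shows "gvec d i h = c"
  unfolding gvec_def
proof (rule the_equality)
  show "(\<forall>j>(d + 1) div 2. c j = 0) \<and> h = (\<Sum>j\<le>(d + 1) div 2. smult (c j) (monom 1 j * Pdi (int d - 2 * int j) i))"
    using assms by (simp add: bsum_Suc)
  fix g assume g: "(\<forall>j>(d + 1) div 2. g j = 0) \<and> h = (\<Sum>j\<le>(d + 1) div 2. smult (g j) (monom 1 j * Pdi (int d - 2 * int j) i))"
  then have "bsum (Suc d) i g = bsum (Suc d) i c" using assms by (simp add: bsum_Suc)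
  show "g = c"
  proof
    fix j show "g j = c j"
    proof (cases "j \<le> (d + 1) div 2")
      case True then show ?thesis using bsum_unique[OF \<open>bsum (Suc d) i g = bsum (Suc d) i c\<close>] by simp
    next
      case False then show ?thesis using g assms by simp
    qed
  qed
qed

lemma bsum_shift:
  assumes "n \<ge> 2"
  shows "bsum n i (case_nat a c) = smult a (Pdi (int n - 1) i) + monom 1 1 * bsum (n - 2) i c"
proof -
  have nd: "n div 2 = Suc ((n - 2) div 2)" using assms by (simp add: div_if)
  have "bsum n i (case_nat a c) = smult a (Pdi (int n - 1) i) +
     (\<Sum>j\<le>(n - 2) div 2. smult (c j) (monom 1 (Suc j) * Pdi (int n - 1 - 2 * int (Suc j)) i))"
    unfolding bsum_def nd sum.atMost_Suc_shift
    by (simp only: nat.case of_nat_0 mult_zero_right diff_zero monom_0 one_pCons[symmetric] mult_1_left)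
  also have "(\<Sum>j\<le>(n - 2) div 2. smult (c j) (monom 1 (Suc j) * Pdi (int n - 1 - 2 * int (Suc j)) i))
     = monom 1 1 * bsum (n - 2) i c"
    unfolding bsum_def sum_distrib_left
  proof (rule sum.cong)
    fix j
    have "int n - 1 - 2 * int (Suc j) = int (n - 2) - 1 - 2 * int j" using assms by simp
    then show "smult (c j) (monom 1 (Suc j) * Pdi (int n - 1 - 2 * int (Suc j)) i) =
         monom 1 1 * smult (c j) (monom 1 j * Pdi (int (n - 2) - 1 - 2 * int j) i)"
      by (simp only: mult.assoc[symmetric] mult_smult_right mult_monom mult_1 Suc_eq_plus1_left)
  qed simp
  finally show ?thesis .
qed


lemma pCons0_monom: "pCons 0 p = monom 1 1 * (p :: rat poly)"
  by (simp add: monom_Suc monom_0)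

lemma symm_poly: "symm n p \<Longrightarrow> x \<noteq> 0 \<Longrightarrow> poly p x = x ^ n * poly p (1 / x)"
  unfolding symm_def by blast

lemma exists_rep:
  assumes "i > 0"
  shows "symm n h \<Longrightarrow> \<exists>c. h = bsum n i c"
proof (induction n arbitrary: h rule: less_induct)
  case (less n h)
  show ?case
  proof (cases "n = 0")
    case True
    then have "degree h = 0" using less.prems unfolding symm_def by simp
    then have "h = [:coeff h 0:]" using degree_0_id by metis
    moreover have "bsum 0 i (\<lambda>_. coeff h 0) = [:coeff h 0:]"
      by (simp add: bsum_def Pdi_def monom_0)
    ultimately show ?thesis using True by metis
  next
    case False
    define a where "a = coeff h 0"
    define P where "P = Pdi (int n - 1) i"
    define r where "r = h - smult a P"
    have "symm (nat (int n - 1 + 1)) P" unfolding P_def by (rule symm_Pdi[OF assms]) simp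
    then have sP: "symm n P" by simp
    have sr: "symm n r" unfolding r_def by (rule symm_diff[OF less.prems sP])
    have r0: "coeff r 0 = 0" unfolding r_def a_def P_def by (simp add: coeff0_Pdi)
    have rn: "coeff r n = 0" using symm_coeff[OF sr] r0 by simp
    obtain r'' where rr: "r = pCons 0 r''" using r0 by (cases r) auto
    have hr: "h = smult a P + monom 1 1 * r''" using rr unfolding r_def pCons0_monom[symmetric] by simp
    show ?thesis
    proof (cases "n = 1")
      case True
      have "r'' = 0"
      proof (rule ccontr)
        assume nz: "r'' \<noteq> 0"
        have "degree r \<le> 1" using sr True unfolding symm_def by simp
        then have "degree r'' = 0" using nz rr by simp
        moreover have "coeff r'' 0 = 0" using rn rr True by simp
        ultimately have "r'' = 0" using degree_0_id by (metis pCons_0_0)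
        then show False using nz by simp
      qed
      then have "h = bsum n i (\<lambda>_. a)" using hr True by (simp add: bsum_def P_def monom_0)
      then show ?thesis by blast
    next
      case False
      then have n2: "n \<ge> 2" using \<open>n \<noteq> 0\<close> by simp
      have "symm (n - 2) r''"
        unfolding symm_def
      proof (intro conjI allI impI)
        show "degree r'' \<le> n - 2"
        proof (cases "r'' = 0")
          case False
          have "degree r \<le> n" using sr unfolding symm_def by simp
          then have d1: "degree r'' \<le> n - 1" using False rr by simp
          have "coeff r'' (n - 1) = 0" using rn rr n2 by (cases n) auto
          then have "degree r'' \<noteq> n - 1" using False leading_coeff_0_iff by metis
          then show ?thesis using d1 by simp
        qed simp
        fix x :: rat assume x: "x \<noteq> 0"
        have e: "poly r x = x ^ n * poly r (1 / x)" using symm_poly[OF sr x] .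
        have xn: "x ^ n = x * x * x ^ (n - 2)" using n2
          by (metis (no_types) le_add_diff_inverse mult.assoc power_add power2_eq_square)
        have "x * poly r'' x = x * x * x ^ (n - 2) * ((1 / x) * poly r'' (1 / x))"
          using e rr xn by simp
        then have "x * poly r'' x = x * (x ^ (n - 2) * poly r'' (1 / x))"
          using x by (simp add: field_simps)
        then show "poly r'' x = x ^ (n - 2) * poly r'' (1 / x)" using x by simp
      qed
      then obtain c'' where c'': "r'' = bsum (n - 2) i c''" using less.IH[of "n - 2" r''] n2 by auto
      have "h = bsum n i (case_nat a c'')"
        unfolding bsum_shift[OF n2] hr c'' P_def by simp
      then show ?thesis by blast
    qed
  qed
qed


lemma smult_sum_right: "smult a (sum f S) = (\<Sum>j\<in>S. smult a (f j))"
  by (induction S rule: infinite_finite_induct) (simp_all add: smult_add_right)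

definition cone :: "nat \<Rightarrow> nat \<Rightarrow> rat poly \<Rightarrow> bool" where
  "cone m n p \<longleftrightarrow> (\<exists>c. (\<forall>j. c j \<ge> 0) \<and> p = bsum n m c)"

lemma cone_zero: "cone m n 0"
  unfolding cone_def by (rule exI[of _ "\<lambda>_. 0"]) (simp add: bsum_def)

lemma cone_add:
  assumes "cone m n p" "cone m n q"
  shows "cone m n (p + q)"
proof -
  obtain c where c: "\<forall>j. c j \<ge> 0" "p = bsum n m c" using assms(1) unfolding cone_def by blast
  obtain c' where c': "\<forall>j. c' j \<ge> 0" "q = bsum n m c'" using assms(2) unfolding cone_def by blast
  have "bsum n m (\<lambda>j. c j + c' j) = bsum n m c + bsum n m c'"
    by (simp add: bsum_def sum.distrib smult_add_left)
  then show ?thesis unfolding cone_def using c c'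
    by (intro exI[of _ "\<lambda>j. c j + c' j"]) (simp add: add_nonneg_nonneg)
qed

lemma cone_smult:
  assumes "cone m n p" "a \<ge> 0"
  shows "cone m n (smult a p)"
proof -
  obtain c where c: "\<forall>j. c j \<ge> 0" "p = bsum n m c" using assms(1) unfolding cone_def by blast
  have "bsum n m (\<lambda>j. a * c j) = smult a (bsum n m c)"
    by (simp add: bsum_def smult_sum_right)
  then show ?thesis unfolding cone_def using c assms(2)
    by (intro exI[of _ "\<lambda>j. a * c j"]) simp
qed

lemma cone_sum:
  assumes "\<And>j. j \<in> S \<Longrightarrow> cone m n (f j)"
  shows "cone m n (sum f S)"
  using assms
proof (induction S rule: infinite_finite_induct)
  case (infinite A) then show ?case by (simp add: cone_zero)
next
  case empty then show ?case by (simp add: cone_zero)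
next
  case (insert x F) then show ?case by (simp add: cone_add)
qed

lemma cone_shift:
  assumes "cone m n p"
  shows "cone m (n + 2) (monom 1 1 * p)"
proof -
  obtain c where c: "\<forall>j. c j \<ge> 0" "p = bsum n m c" using assms(1) unfolding cone_def by blast
  have "bsum (n + 2) m (case_nat 0 c) = smult 0 (Pdi (int (n + 2) - 1) m) + monom 1 1 * bsum (n + 2 - 2) m c"
    by (rule bsum_shift) simp
  then have "monom 1 1 * p = bsum (n + 2) m (case_nat 0 c)" using c by simp
  moreover have "\<forall>j. case_nat 0 c j \<ge> (0::rat)" using c by (auto split: nat.split)
  ultimately show ?thesis unfolding cone_def by blast
qed

lemma cone_shiftk:
  assumes "cone m n p"
  shows "cone m (n + 2 * k) (monom 1 k * p)"
proof (induction k)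
  case 0 then show ?case using assms by (simp add: monom_0 one_pCons[symmetric])
next
  case (Suc k)
  have "cone m (n + 2 * k + 2) (monom 1 1 * (monom 1 k * p))" by (rule cone_shift[OF Suc])
  moreover have "monom 1 1 * (monom 1 k * p) = monom 1 (Suc k) * p"
    by (simp add: mult.assoc[symmetric] mult_monom)
  moreover have "n + 2 * k + 2 = n + 2 * Suc k" by simp
  ultimately show ?case by metis
qed

lemma cone_P: "cone m n (Pdi (int n - 1) m)"
proof -
  have "bsum n m (\<lambda>j. if j = 0 then 1 else 0) = (\<Sum>j\<le>n div 2. if j = 0 then Pdi (int n - 1) m else 0)"
    unfolding bsum_def by (rule sum.cong) (simp_all add: monom_0 one_pCons[symmetric])
  also have "\<dots> = Pdi (int n - 1) m" by (simp add: sum.delta)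
  finally show ?thesis unfolding cone_def
    by (intro exI[of _ "\<lambda>j. if j = 0 then 1 else 0"]) simp
qed


lemma Pdi_nat:
  assumes "m > 0" "y < m"
  shows "Pdi (int (k * m + y)) m = geom_poly m ^ k * geom_poly (y + 1)"
proof -
  have e: "int (k * m + y) = int y + int k * int m" by simp
  have d: "int (k * m + y) div int m = int k"
    unfolding e using assms by (simp add: div_pos_pos_trivial)
  have r: "int (k * m + y) mod int m = int y"
    unfolding e using assms by (simp add: mod_pos_pos_trivial)
  show ?thesis using Pdi_pos[of "int (k * m + y)" m] d r by simp
qed

lemma cone_basic:
  assumes "m > 0" "x \<le> m"
  shows "cone m (k * m + x) (geom_poly m ^ k * geom_poly x)"
proof (cases x)
  case 0
  show ?thesis
  proof (cases k)
    case 0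
    have "Pdi (int 0 - 1) m = 1" by (simp add: Pdi_def)
    then show ?thesis using cone_P[of m 0] \<open>x = 0\<close> 0 by (simp add: geom_0)
  next
    case (Suc k')
    have "int (k * m + x) - 1 = int (k' * m + (m - 1))" using Suc \<open>x = 0\<close> assms by (simp add: of_nat_diff)
    moreover have "Pdi (int (k' * m + (m - 1))) m = geom_poly m ^ k' * geom_poly (m - 1 + 1)"
      using assms by (intro Pdi_nat) auto
    moreover have "geom_poly m ^ k' * geom_poly (m - 1 + 1) = geom_poly m ^ k * geom_poly x"
      using Suc \<open>x = 0\<close> assms by (simp add: geom_0 mult.commute)
    ultimately show ?thesis using cone_P[of m "k * m + x"] by metis
  qed
next
  case (Suc y)
  have "int (k * m + x) - 1 = int (k * m + y)" using Suc by simp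
  moreover have "Pdi (int (k * m + y)) m = geom_poly m ^ k * geom_poly (y + 1)"
    using assms Suc by (intro Pdi_nat) auto
  ultimately show ?thesis using cone_P[of m "k * m + x"] Suc by simp
qed

lemma monom_X: "monom (1::rat) n = X ^ n"
  by (simp add: monom_altdef)

lemma ring_aux2: "a * b = u * v + y * w \<Longrightarrow> M * a * b * Q = M * u * v * Q + y * (M * w * Q)"
  for a b u v y w M Q :: "'a::comm_ring_1"
proof -
  assume h: "a * b = u * v + y * w"
  have "M * a * b * Q = M * (a * b) * Q" by (simp add: mult.assoc)
  also have "\<dots> = M * u * v * Q + y * (M * w * Q)" unfolding h by (simp add: algebra_simps)
  finally show ?thesis .
qed

lemma cone_main:
  assumes "m > 0" "i \<le> m"
  shows "\<forall>k x. x \<le> m \<longrightarrow> cone m (k * m + x + q * i) (geom_poly m ^ k * geom_poly x * geom_poly i ^ q)"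
proof (induction q)
  case 0 then show ?case using cone_basic[OF assms(1)] by simp
next
  case (Suc q)
  note outer = Suc.IH
  have inner: "\<forall>b k. x \<le> b \<longrightarrow> b \<le> m \<longrightarrow>
     cone m (k * m + x + b + q * i) (geom_poly m ^ k * geom_poly x * geom_poly b * geom_poly i ^ q)" for x
  proof (induction x)
    case 0 show ?case
    proof (intro allI impI)
      fix b k assume "0 \<le> b" "b \<le> m"
      then show "cone m (k * m + 0 + b + q * i) (geom_poly m ^ k * geom_poly 0 * geom_poly b * geom_poly i ^ q)"
        using outer by (simp add: geom_0)
    qed
  next
    case (Suc x')
    show ?case
    proof (intro allI impI)
      fix b k assume b: "Suc x' \<le> b" "b \<le> m"
      show "cone m (k * m + Suc x' + b + q * i) (geom_poly m ^ k * geom_poly (Suc x') * geom_poly b * geom_poly i ^ q)"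
      proof (cases "b = m")
        case True
        have "cone m (Suc k * m + Suc x' + q * i) (geom_poly m ^ Suc k * geom_poly (Suc x') * geom_poly i ^ q)"
          using outer[rule_format, of "Suc x'" "Suc k"] b True by simp
        then show ?thesis using True by (simp add: algebra_simps)
      next
        case False
        obtain c where c: "b = Suc x' + c" using b(1) le_Suc_ex by blast
        have S: "geom_poly (Suc x') * geom_poly b = geom_poly x' * geom_poly (Suc (Suc x') + c) + X ^ Suc x' * geom_poly c"
          unfolding c by (rule geom_S)
        have t1: "cone m (k * m + x' + (Suc (Suc x') + c) + q * i) (geom_poly m ^ k * geom_poly x' * geom_poly ((Suc (Suc x') + c)) * geom_poly i ^ q)"
          by (rule Suc.IH[rule_format]) (use b False c in auto)
        have "cone m (k * m + c + q * i) (geom_poly m ^ k * geom_poly c * geom_poly i ^ q)"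
          using outer b c by simp
        then have t2: "cone m (k * m + c + q * i + 2 * Suc x') (monom 1 (Suc x') * (geom_poly m ^ k * geom_poly c * geom_poly i ^ q))"
          by (rule cone_shiftk)
        have "geom_poly m ^ k * geom_poly (Suc x') * geom_poly b * geom_poly i ^ q =
          geom_poly m ^ k * geom_poly x' * geom_poly ((Suc (Suc x') + c)) * geom_poly i ^ q +
          monom 1 (Suc x') * (geom_poly m ^ k * geom_poly c * geom_poly i ^ q)"
          unfolding monom_X using ring_aux2[OF S] .
        moreover have "k * m + x' + (Suc (Suc x') + c) + q * i = k * m + Suc x' + b + q * i" using c by simp
        moreover have "k * m + c + q * i + 2 * Suc x' = k * m + Suc x' + b + q * i" using c by simp
        moreover have n1: "k * m + c + q * i + 2 * Suc x' = k * m + x' + (Suc (Suc x') + c) + q * i" by simp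
        ultimately show ?thesis using cone_add[OF t1 t2[unfolded n1]] by metis
      qed
    qed
  qed
  show ?case
  proof (intro allI impI)
    fix k x assume x: "x \<le> m"
    have eq: "geom_poly m ^ k * geom_poly x * geom_poly i ^ Suc q = geom_poly m ^ k * geom_poly x * geom_poly i * geom_poly i ^ q"
      by (simp add: algebra_simps)
    show "cone m (k * m + x + Suc q * i) (geom_poly m ^ k * geom_poly x * geom_poly i ^ Suc q)"
    proof (cases "x \<le> i")
      case True
      have "cone m (k * m + x + i + q * i) (geom_poly m ^ k * geom_poly x * geom_poly i * geom_poly i ^ q)"
        using inner[of x, rule_format, of i k] True assms by simp
      moreover have "k * m + x + i + q * i = k * m + x + Suc q * i" by simp
      ultimately show ?thesis unfolding eq by metis
    next
      case False
      have "cone m (k * m + i + x + q * i) (geom_poly m ^ k * geom_poly i * geom_poly x * geom_poly i ^ q)"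
        using inner[of i] False x by simp
      then show ?thesis unfolding eq by (simp add: algebra_simps)
    qed
  qed
qed


lemma cone_Pdi:
  assumes "i > 0" "e \<ge> -1"
  shows "cone (i + 1) (nat (e + 1)) (Pdi e i)"
proof (cases "e < 0")
  case True
  then have "e = -1" using assms by simp
  then show ?thesis using cone_basic[of "i + 1" 0 0] by (simp add: Pdi_def geom_0)
next
  case False
  define q where "q = nat (e div int i)"
  define r where "r = nat (e mod int i) + 1"
  have P: "Pdi e i = geom_poly i ^ q * geom_poly r"
    unfolding q_def r_def using False by (simp add: Pdi_def)
  have "e mod int i < int i" using assms by simp
  then have ri: "r \<le> i + 1" unfolding r_def by simp
  have n: "nat (e + 1) = 0 * (i + 1) + r + q * i"
  proof -
    have "int i * (e div int i) + e mod int i = e" by simp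
    moreover have "e div int i \<ge> 0" "e mod int i \<ge> 0" using False assms by (auto simp: pos_imp_zdiv_nonneg_iff)
    ultimately have "int (0 * (i + 1) + r + q * i) = e + 1" unfolding q_def r_def by (simp add: algebra_simps)
    then show ?thesis by (metis nat_int)
  qed
  have "cone (i + 1) (0 * (i + 1) + r + q * i) (geom_poly (i + 1) ^ 0 * geom_poly r * geom_poly i ^ q)"
    using cone_main[of "i + 1" i q, rule_format, of r 0] ri by simp
  then show ?thesis unfolding n P by (simp add: mult.commute)
qed

lemma cone_basis:
  assumes "i > 0" "j \<le> (d + 1) div 2"
  shows "cone (i + 1) (d + 1) (monom 1 j * Pdi (int d - 2 * int j) i)"
proof -
  have e: "int d - 2 * int j \<ge> -1" using assms(2) by linarith
  have "cone (i + 1) (nat (int d - 2 * int j + 1) + 2 * j) (monom 1 j * Pdi (int d - 2 * int j) i)"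
    by (rule cone_shiftk[OF cone_Pdi[OF assms(1) e]])
  moreover have "nat (int d - 2 * int j + 1) + 2 * j = d + 1" using e by linarith
  ultimately show ?thesis by simp
qed

theorem proposition1p2:
  fixes d i :: nat and h :: "rat poly"
  assumes "i > 0"
    and "degree h \<le> d + 1"
    and "\<forall>t::rat. t \<noteq> 0 \<longrightarrow> poly h t = t ^ (d + 1) * poly h (1 / t)"
    and "\<forall>j \<le> (d + 1) div 2. gvec d i h j \<ge> 0"
  shows "\<forall>j \<le> (d + 1) div 2. gvec d (i + 1) h j \<ge> 0"
proof -
  have sh0: "symm (d + 1) h" unfolding symm_def using assms(2,3) by blast
  then have sh: "symm (Suc d) h" by simp
  obtain c0 where c0: "h = bsum (Suc d) i c0" using exists_rep[OF assms(1) sh] by blast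
  define c where "c = (\<lambda>j. if j \<le> (d + 1) div 2 then c0 j else 0)"
  have "bsum (Suc d) i c = bsum (Suc d) i c0"
    unfolding bsum_def c_def by (rule sum.cong) auto
  then have hc: "h = bsum (Suc d) i c" using c0 by simp
  have "gvec d i h = c" by (rule gvec_eq) (use hc c_def in auto)
  then have cnn: "\<forall>j \<le> (d + 1) div 2. c j \<ge> 0" using assms(4) by simp
  have "cone (i + 1) (d + 1) h"
    unfolding hc bsum_Suc
  proof (rule cone_sum)
    fix j assume "j \<in> {..(d + 1) div 2}"
    then show "cone (i + 1) (d + 1) (smult (c j) (monom 1 j * Pdi (int d - 2 * int j) i))"
      using cone_smult cone_basis assms(1) cnn by simp
  qed
  then obtain c' where c': "\<forall>j. c' j \<ge> 0" "h = bsum (d + 1) (i + 1) c'" unfolding cone_def by blast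
  define c'' where "c'' = (\<lambda>j. if j \<le> (d + 1) div 2 then c' j else 0)"
  have "bsum (Suc d) (i + 1) c'' = bsum (Suc d) (i + 1) c'"
    unfolding bsum_def c''_def by (rule sum.cong) auto
  then have hc'': "h = bsum (Suc d) (i + 1) c''" using c' by simp
  have "gvec d (i + 1) h = c''" by (rule gvec_eq) (use hc'' c''_def in auto)
  then show ?thesis using c' c''_def by simp
qed

end
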